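(* Let $p\ge0$, $q\ge1$, $\mathbf{k}=(k_1,\dots,k_r)$ with $k_i\ge1$, and let $Z\in\tilde V_{\mathbf{k}}(\mathbb{R}^{p,q})$ (if $q=1$, let $Z$ lie in the component $\tilde V_{\mathbf{k}}(\mathbb{R}^{p,1})_\Sigma$ for a fixed $\Sigma\in\prod_i\mathfrak{S}_{k_i}$). Then there is a unique ray partition $Q^Z$ of type $\mathbf{k}$ which is witnessed by $Z$ and has maximal weight among all ray partitions of type $\mathbf{k}$ witnessed by $Z$. If $q=1$, moreover $\Sigma(Q^Z)=\Sigma$.
   Context: $d=p+q$; points of $\mathbb{R}^d$ are written $(\zeta,t)\in\mathbb{R}^{d-1}\times\mathbb{R}$, with projections $\mathrm{pr}_\zeta$, $\mathrm{pr}_t$; $\mathrm{pr}_1:\mathbb{R}^d\to\mathbb{R}^p$ is the projection to the first $p$ coordinates. $\tilde V_{\mathbf{k}}(\mathbb{R}^{p,q})\subseteq\prod_i(\mathbb{R}^d)^{k_i}$ consists of tuples $Z=(z_i^j)$ of pairwise distinct points with $\mathrm{pr}_1(z_i^1)=\dots=\mathrm{pr}_1(z_i^{k_i})$ for each $i$. For $q=1$ and $\Sigma=(\sigma_i)$, $\tilde V_{\mathbf{k}}(\mathbb{R}^{p,1})_\Sigma$ is the set of such $Z$ with $\mathrm{pr}_t(z_i^{\sigma_i(j)})<\mathrm{pr}_t(z_i^{\sigma_i(j+1)})$ for all $i$, $j$. Table $T_{\mathbf{k}}=\{(i,j):1\le i\le r,1\le j\le k_i\}$ with lexicographic order $<$.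 A ray partition $Q$ of type $\mathbf{k}$: a partition of $T_{\mathbf{k}}$ into nonempty pieces $Q_1,\dots,Q_l$, each with a total order $\prec_\beta$, with $\min(Q_1,<)<\dots<\min(Q_l,<)$ and $\min(Q_\beta,\prec_\beta)=\min(Q_\beta,<)$ for all $\beta$. $Q$ is witnessed by $Z$ if (W1) for each $\beta$, all $z_i^j$ with $(i,j)\in Q_\beta$ have the same image under $\mathrm{pr}_\zeta$, and (W2) $(i,j)\prec_\beta(i',j')$ implies $\mathrm{pr}_t(z_i^j)<\mathrm{pr}_t(z_{i'}^{j'})$. The weight of $Q$ is $\omega(Q)=(|Q_1|,\dots,|Q_l|)$, an element of the set $\mathbb{P}(\mathbf{k})$ of sequences of positive integers summing to $|\mathbf{k}|$; these are compared lexicographically after padding with zeros to length $|\mathbf{k}|$. For $q=1$, $\Sigma(Q)=(\sigma_1,\dots,\sigma_r)$ is defined via the stacked total order $\prec$ on $T_{\mathbf{k}}$ (restricting to $\prec_\beta$ on $Q_\beta$, with all elements of $Q_{\beta+1}$ smaller than those of $Q_\beta$): $\sigma_i$ is the unique permutation with $(i,\sigma_i(j))\prec(i,\sigma_i(j+1))$ for all $j$. *)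

theory Defs
  imports Complex_Main "HOL-Combinatorics.Permutations"
begin

(* Conventions: k = [k_1,...,k_r] is a list, k_i = k ! (i-1), indices are 1-based.
   A point of R^d (d = p+q) is a real list of length d; the last coordinate is t,
   pr_zeta = butlast, pr_t = last, pr_1 = take p.
   A configuration Z is a function on the table T_k. *)

definition kth :: "nat list \<Rightarrow> nat \<Rightarrow> nat" where
  "kth k i = k ! (i - 1)"

definition table :: "nat list \<Rightarrow> (nat \<times> nat) set" where
  "table k = {(i, j). 1 \<le> i \<and> i \<le> length k \<and> 1 \<le> j \<and> j \<le> kth k i}"

definition lex_less :: "nat \<times> nat \<Rightarrow> nat \<times> nat \<Rightarrow> bool" where
  "lex_less x y \<longleftrightarrow> fst x < fst y \<or> (fst x = fst y \<and> snd x < snd y)"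

definition pr_zeta :: "real list \<Rightarrow> real list" where "pr_zeta z = butlast z"
definition pr_t :: "real list \<Rightarrow> real" where "pr_t z = last z"
definition pr_1 :: "nat \<Rightarrow> real list \<Rightarrow> real list" where "pr_1 p z = take p z"

definition Vtilde :: "nat \<Rightarrow> nat \<Rightarrow> nat list \<Rightarrow> (nat \<times> nat \<Rightarrow> real list) \<Rightarrow> bool" where
  "Vtilde p q k Z \<longleftrightarrow>
     (\<forall>x\<in>table k. length (Z x) = p + q) \<and> inj_on Z (table k) \<and>
     (\<forall>i j j'. (i, j) \<in> table k \<longrightarrow> (i, j') \<in> table k \<longrightarrow> pr_1 p (Z (i, j)) = pr_1 p (Z (i, j')))"

(* A ray partition is a list of pieces Q_1..Q_l; each piece is a list whose
   list order is the total order \<prec>_\<beta>. *)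
definition ray_partition :: "nat list \<Rightarrow> (nat \<times> nat) list list \<Rightarrow> bool" where
  "ray_partition k Q \<longleftrightarrow>
     (\<forall>B\<in>set Q. B \<noteq> []) \<and> distinct (concat Q) \<and> set (concat Q) = table k \<and>
     (\<forall>B\<in>set Q. \<forall>x\<in>set B. x \<noteq> hd B \<longrightarrow> lex_less (hd B) x) \<and>
     (\<forall>b. Suc b < length Q \<longrightarrow> lex_less (hd (Q ! b)) (hd (Q ! Suc b)))"

definition witnessed :: "(nat \<times> nat \<Rightarrow> real list) \<Rightarrow> (nat \<times> nat) list list \<Rightarrow> bool" where
  "witnessed Z Q \<longleftrightarrow>
     (\<forall>B\<in>set Q. \<forall>x\<in>set B. \<forall>y\<in>set B. pr_zeta (Z x) = pr_zeta (Z y)) \<and>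
     (\<forall>B\<in>set Q. \<forall>a b. a < b \<and> b < length B \<longrightarrow> pr_t (Z (B ! a)) < pr_t (Z (B ! b)))"

definition weight :: "(nat \<times> nat) list list \<Rightarrow> nat list" where
  "weight Q = map length Q"

definition pad :: "nat list \<Rightarrow> nat list \<Rightarrow> nat list" where
  "pad k w = w @ replicate (sum_list k - length w) 0"

definition lex_le :: "nat list \<Rightarrow> nat list \<Rightarrow> bool" where
  "lex_le xs ys \<longleftrightarrow> xs = ys \<or> (xs, ys) \<in> lexord less_than"

definition max_witnessed ::
  "nat list \<Rightarrow> (nat \<times> nat \<Rightarrow> real list) \<Rightarrow> (nat \<times> nat) list list \<Rightarrow> bool" where
  "max_witnessed k Z Q \<longleftrightarrow> ray_partition k Q \<and> witnessed Z Q \<and>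
     (\<forall>Q'. ray_partition k Q' \<and> witnessed Z Q' \<longrightarrow> lex_le (pad k (weight Q')) (pad k (weight Q)))"

definition valid_Sigma :: "nat list \<Rightarrow> (nat \<Rightarrow> nat \<Rightarrow> nat) \<Rightarrow> bool" where
  "valid_Sigma k sig \<longleftrightarrow> (\<forall>i\<in>{1..length k}. sig i permutes {1..kth k i})"

definition in_component :: "nat list \<Rightarrow> (nat \<Rightarrow> nat \<Rightarrow> nat) \<Rightarrow> (nat \<times> nat \<Rightarrow> real list) \<Rightarrow> bool" where
  "in_component k sig Z \<longleftrightarrow>
     (\<forall>i\<in>{1..length k}. \<forall>j. 1 \<le> j \<and> j < kth k i \<longrightarrow>
        pr_t (Z (i, sig i j)) < pr_t (Z (i, sig i (Suc j))))"

(* stacked order \<prec>: list concat (rev Q) (later pieces are smaller) *)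
definition stacked :: "(nat \<times> nat) list list \<Rightarrow> (nat \<times> nat) list" where
  "stacked Q = concat (rev Q)"

definition Sigma_of_eq :: "nat list \<Rightarrow> (nat \<times> nat) list list \<Rightarrow> (nat \<Rightarrow> nat \<Rightarrow> nat) \<Rightarrow> bool" where
  "Sigma_of_eq k Q sig \<longleftrightarrow>
     (\<forall>i\<in>{1..length k}. \<forall>j\<in>{1..kth k i}.
        sig i j = snd (filter (\<lambda>x. fst x = i) (stacked Q) ! (j - 1)))"

end

theory Submission
  imports Defs
begin


definition rp :: "(nat \<times> nat) set \<Rightarrow> (nat \<times> nat) list list \<Rightarrow> bool" where
  "rp S Q \<longleftrightarrow>
     (\<forall>B\<in>set Q. B \<noteq> []) \<and> distinct (concat Q) \<and> set (concat Q) = S \<and>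
     (\<forall>B\<in>set Q. \<forall>x\<in>set B. x \<noteq> hd B \<longrightarrow> lex_less (hd B) x) \<and>
     (\<forall>b. Suc b < length Q \<longrightarrow> lex_less (hd (Q ! b)) (hd (Q ! Suc b)))"

definition wit :: "(nat \<times> nat \<Rightarrow> real list) \<Rightarrow> (nat \<times> nat \<Rightarrow> real) \<Rightarrow> (nat \<times> nat) list list \<Rightarrow> bool" where
  "wit c t Q \<longleftrightarrow>
     (\<forall>B\<in>set Q. \<forall>x\<in>set B. \<forall>y\<in>set B. c x = c y) \<and>
     (\<forall>B\<in>set Q. \<forall>a b. a < b \<and> b < length B \<longrightarrow> t (B ! a) < t (B ! b))"

lemma lex_trans: "lex_less x y \<Longrightarrow> lex_less y z \<Longrightarrow> lex_less x z"
  unfolding lex_less_def by auto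

lemma lex_asym: "lex_less x y \<Longrightarrow> \<not> lex_less y x"
  unfolding lex_less_def by auto

lemma lex_irrefl: "\<not> lex_less x x"
  unfolding lex_less_def by auto

lemma lex_total: "x \<noteq> y \<Longrightarrow> lex_less x y \<or> lex_less y x"
  unfolding lex_less_def by (simp add: prod_eq_iff) linarith

lemma lexmin: "finite S \<Longrightarrow> S \<noteq> {} \<Longrightarrow> \<exists>h\<in>S. \<forall>x\<in>S. x \<noteq> h \<longrightarrow> lex_less h x"
proof (induction S rule: finite_ne_induct)
  case (singleton x) then show ?case by blast
next
  case (insert x F)
  from insert.IH obtain h where h: "h \<in> F" "\<forall>y\<in>F. y \<noteq> h \<longrightarrow> lex_less h y" by blast
  have xh: "x \<noteq> h" using insert.hyps h(1) by blast
  show ?case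
  proof (cases "lex_less x h")
    case True
    have "\<forall>y\<in>insert x F. y \<noteq> x \<longrightarrow> lex_less x y"
    proof
      fix y assume y: "y \<in> insert x F"
      show "y \<noteq> x \<longrightarrow> lex_less x y"
      proof
        assume "y \<noteq> x"
        then have "y \<in> F" using y by blast
        show "lex_less x y"
        proof (cases "y = h")
          case True then show ?thesis using \<open>lex_less x h\<close> by simp
        next
          case False then show ?thesis using h \<open>y \<in> F\<close> \<open>lex_less x h\<close> lex_trans by blast
        qed
      qed
    qed
    then show ?thesis by (intro bexI[of _ x]) simp_all
  next
    case False
    then have "lex_less h x" using lex_total xh by blast
    have "\<forall>y\<in>insert x F. y \<noteq> h \<longrightarrow> lex_less h y" using h \<open>lex_less h x\<close> by blast
    then show ?thesis using h(1) by (intro bexI[of _ h]) simp_all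
  qed
qed

lemma sort_exists:
  assumes "finite A" "inj_on t A"
  shows "\<exists>L. distinct L \<and> set L = A \<and> sorted_wrt (\<lambda>x y. (t x :: real) < t y) L"
proof -
  obtain xs where xs: "set xs = A" "distinct xs" using finite_distinct_list assms(1) by blast
  define L where "L = sort_key t xs"
  have "set L = A" "distinct L" using xs by (auto simp: L_def)
  moreover have "sorted (map t L)" by (simp add: L_def)
  moreover have "distinct (map t L)" using \<open>distinct L\<close> \<open>set L = A\<close> assms(2)
    by (simp add: distinct_map)
  ultimately have "sorted_wrt (<) (map t L)" by (simp add: strict_sorted_iff)
  then show ?thesis using \<open>set L = A\<close> \<open>distinct L\<close> by (auto simp: sorted_wrt_map)
qed

lemma sorted_unique:
  assumes "sorted_wrt (\<lambda>x y. (t x :: real) < t y) L1" "sorted_wrt (\<lambda>x y. t x < t y) L2"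
    "set L1 = set L2" "inj_on t (set L1)"
  shows "L1 = L2"
proof -
  have "map t L1 = map t L2"
    using assms by (intro strict_sorted_equal) (auto simp: sorted_wrt_map)
  then show ?thesis using assms(3,4) by (simp add: inj_on_map_eq_map)
qed

lemma heads_chain:
  assumes "rp S Q" "b < length Q" "0 < b"
  shows "lex_less (hd (Q!0)) (hd (Q!b))"
  using assms(2,3)
proof (induction b)
  case 0 then show ?case by simp
next
  case (Suc b)
  have step: "lex_less (hd (Q!b)) (hd (Q!Suc b))" using assms(1) Suc.prems unfolding rp_def by blast
  show ?case
  proof (cases "b = 0")
    case True then show ?thesis using step by simp
  next
    case False then show ?thesis using Suc step lex_trans by auto
  qed
qed



lemma rp_nil: "rp {} Q \<longleftrightarrow> Q = []"
proof
  assume "rp {} Q"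
  then have "\<forall>B\<in>set Q. B \<noteq> []" "set (concat Q) = {}" unfolding rp_def by auto
  then show "Q = []" by (cases Q) auto
qed (simp add: rp_def)

lemma rp_tail:
  assumes "rp S (B # Qt)"
  shows "rp (S - set B) Qt"
proof -
  have d: "distinct B" "distinct (concat Qt)" "set B \<inter> set (concat Qt) = {}"
    using assms unfolding rp_def by auto
  have "set (concat Qt) = S - set B" using assms d(3) unfolding rp_def by auto
  moreover have "\<forall>b. Suc b < length Qt \<longrightarrow> lex_less (hd (Qt ! b)) (hd (Qt ! Suc b))"
  proof (intro allI impI)
    fix b assume "Suc b < length Qt"
    then have "Suc (Suc b) < length (B # Qt)" by simp
    then have "lex_less (hd ((B#Qt) ! Suc b)) (hd ((B#Qt) ! Suc (Suc b)))"
      using assms unfolding rp_def by blast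
    then show "lex_less (hd (Qt ! b)) (hd (Qt ! Suc b))" by simp
  qed
  ultimately show ?thesis using assms d unfolding rp_def by auto
qed

lemma wit_cons: "wit c t (B # Q) \<longleftrightarrow> (\<forall>x\<in>set B. \<forall>y\<in>set B. c x = c y) \<and>
   (\<forall>a b. a < b \<and> b < length B \<longrightarrow> t (B!a) < t (B!b)) \<and> wit c t Q"
  unfolding wit_def by (simp only: list.set ball_simps conj_ac)

lemma wit_tail: "wit c t (B # Qt) \<Longrightarrow> wit c t Qt"
  unfolding wit_cons by (elim conjE)

lemma greedy:
  fixes c :: "nat \<times> nat \<Rightarrow> real list" and t :: "nat \<times> nat \<Rightarrow> real"
  assumes "finite S" "\<forall>x\<in>S. \<forall>y\<in>S. c x = c y \<and> t x = t y \<longrightarrow> x = y"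
  shows "\<exists>Q. rp S Q \<and> wit c t Q \<and> sorted_wrt (\<lambda>x y. c x = c y \<longrightarrow> t x < t y) (concat (rev Q)) \<and>
    (\<forall>Q'. rp S Q' \<and> wit c t Q' \<longrightarrow> Q' = Q \<or>
       (\<exists>b. b < length Q' \<and> b < length Q \<and> take b Q' = take b Q \<and> length (Q' ! b) < length (Q ! b)))"
  using assms
proof (induction S rule: finite_psubset_induct)
  case (psubset S)
  show ?case
  proof (cases "S = {}")
    case True
    then show ?thesis by (intro exI[of _ "[]"]) (auto simp: rp_nil wit_def)
  next
    case False
    obtain h where h: "h \<in> S" "\<forall>x\<in>S. x \<noteq> h \<longrightarrow> lex_less h x"
      using lexmin psubset.hyps(1) False by blast
    define A where "A = {x\<in>S. c x = c h \<and> t h \<le> t x}"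
    have AS: "A \<subseteq> S" unfolding A_def by auto
    have finA: "finite A" using AS psubset.hyps(1) finite_subset by blast
    have injA: "inj_on t A" using psubset.prems unfolding A_def inj_on_def by auto
    have hA: "h \<in> A" using h unfolding A_def by auto
    obtain L where L: "distinct L" "set L = A" "sorted_wrt (\<lambda>x y. t x < t y) L"
      using sort_exists[OF finA injA] by blast
    have Lne: "L \<noteq> []" using L(2) hA by auto
    have hdL: "hd L = h"
    proof (rule ccontr)
      assume ne: "hd L \<noteq> h"
      obtain y ys where Ly: "L = y # ys" using Lne by (cases L) auto
      have "h \<in> set ys" using hA L(2) ne Ly by auto
      then have "t y < t h" using L(3) Ly by auto
      moreover have "y \<in> A" using L(2) Ly by auto
      ultimately show False unfolding A_def by auto
    qed
    have sub: "S - A \<subset> S" using hA AS by blast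
    have inj': "\<forall>x\<in>S - A. \<forall>y\<in>S - A. c x = c y \<and> t x = t y \<longrightarrow> x = y" using psubset.prems by blast
    obtain Qr where Qr: "rp (S - A) Qr" "wit c t Qr"
      "sorted_wrt (\<lambda>x y. c x = c y \<longrightarrow> t x < t y) (concat (rev Qr))"
      "\<forall>Q'. rp (S - A) Q' \<and> wit c t Q' \<longrightarrow> Q' = Qr \<or>
       (\<exists>b. b < length Q' \<and> b < length Qr \<and> take b Q' = take b Qr \<and> length (Q' ! b) < length (Qr ! b))"
      using psubset.IH[OF sub inj'] by blast
    define Q where "Q = L # Qr"
    have rpQ: "rp S Q"
    proof -
      have a1: "\<forall>B\<in>set Q. B \<noteq> []" using Qr(1) Lne unfolding rp_def Q_def by auto
      have a2: "distinct (concat Q)" using Qr(1) L(1,2) unfolding rp_def Q_def by auto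
      have a3: "set (concat Q) = S" using Qr(1) L(2) AS unfolding rp_def Q_def by auto
      have a4: "\<forall>B\<in>set Q. \<forall>x\<in>set B. x \<noteq> hd B \<longrightarrow> lex_less (hd B) x"
        using Qr(1) hdL h L(2) AS unfolding rp_def Q_def by auto
      have a5: "\<forall>b. Suc b < length Q \<longrightarrow> lex_less (hd (Q ! b)) (hd (Q ! Suc b))"
      proof (intro allI impI)
        fix b assume b: "Suc b < length Q"
        show "lex_less (hd (Q ! b)) (hd (Q ! Suc b))"
        proof (cases b)
          case 0
          then have "Qr \<noteq> []" using b Q_def by auto
          then have "Qr ! 0 \<in> set Qr" by simp
          then have "Qr ! 0 \<noteq> []" "set (Qr ! 0) \<subseteq> S - A" using Qr(1) unfolding rp_def by auto
          then have "hd (Qr ! 0) \<in> S - A" using hd_in_set by blast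
          then have "lex_less h (hd (Qr ! 0))" using h hA by auto
          then show ?thesis using 0 hdL Q_def by simp
        next
          case (Suc b')
          then have "Suc b' < length Qr" using b Q_def by simp
          then show ?thesis using Qr(1) Suc Q_def unfolding rp_def by simp
        qed
      qed
      show ?thesis using a1 a2 a3 a4 a5 unfolding rp_def by blast
    qed
    have witQ: "wit c t Q"
    proof -
      have "\<forall>x\<in>set L. \<forall>y\<in>set L. c x = c y" using L(2) unfolding A_def by auto
      moreover have "\<forall>a b. a < b \<and> b < length L \<longrightarrow> t (L ! a) < t (L ! b)"
        using L(3) by (simp add: sorted_wrt_iff_nth_less)
      ultimately show ?thesis using Qr(2) unfolding wit_cons Q_def by blast
    qed
    have sortQ: "sorted_wrt (\<lambda>x y. c x = c y \<longrightarrow> t x < t y) (concat (rev Q))"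
    proof -
      have "concat (rev Q) = concat (rev Qr) @ L" by (simp add: Q_def)
      moreover have "sorted_wrt (\<lambda>x y. c x = c y \<longrightarrow> t x < t y) L"
        by (rule sorted_wrt_mono_rel[OF _ L(3)]) simp
      moreover have "\<forall>x\<in>set (concat (rev Qr)). \<forall>y\<in>set L. c x = c y \<longrightarrow> t x < t y"
      proof (intro ballI impI)
        fix x y assume x: "x \<in> set (concat (rev Qr))" and y: "y \<in> set L" and cxy: "c x = c y"
        have "x \<in> S - A" using x Qr(1) unfolding rp_def by auto
        moreover have "y \<in> A" using y L(2) by auto
        ultimately show "t x < t y" using cxy unfolding A_def by auto
      qed
      ultimately show ?thesis using Qr(3) by (simp add: sorted_wrt_append)
    qed
    have maxQ: "\<forall>Q'. rp S Q' \<and> wit c t Q' \<longrightarrow> Q' = Q \<or>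
       (\<exists>b. b < length Q' \<and> b < length Q \<and> take b Q' = take b Q \<and> length (Q' ! b) < length (Q ! b))"
    proof (intro allI impI)
      fix Q' assume Q': "rp S Q' \<and> wit c t Q'"
      have "Q' \<noteq> []" using Q' False unfolding rp_def by auto
      then obtain B Qt where BQt: "Q' = B # Qt" by (cases Q') auto
      have Bne: "B \<noteq> []" using Q' BQt unfolding rp_def by auto
      have BS: "set B \<subseteq> S" using Q' BQt unfolding rp_def by auto
      have distB: "distinct B" using Q' BQt unfolding rp_def by auto
      have hdB: "hd B = h"
      proof (rule ccontr)
        assume ne: "hd B \<noteq> h"
        have hdBS: "hd B \<in> S" using Bne BS by auto
        then have l1: "lex_less h (hd B)" using h ne by auto
        have "h \<in> set (concat Q')" using Q' h unfolding rp_def by auto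
        then obtain B0 where B0: "B0 \<in> set Q'" "h \<in> set B0" by auto
        then obtain b where b0: "b < length Q'" "Q' ! b = B0" by (meson in_set_conv_nth)
        have b: "b < length Q'" "h \<in> set (Q' ! b)" using b0 B0 by auto
        have hds: "\<forall>B\<in>set Q'. \<forall>x\<in>set B. x \<noteq> hd B \<longrightarrow> lex_less (hd B) x"
          using Q' unfolding rp_def by blast
        have hb: "hd (Q' ! b) = h \<or> lex_less (hd (Q' ! b)) h"
        proof -
          have "h \<noteq> hd B0 \<longrightarrow> lex_less (hd B0) h" using hds B0 by blast
          then show ?thesis using b0 by metis
        qed
        show False
        proof (cases b)
          case 0
          then show ?thesis using hb ne l1 lex_asym BQt by auto
        next
          case (Suc b')
          then have "lex_less (hd (Q' ! 0)) (hd (Q' ! b))" using heads_chain Q' b(1) by blast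
          then have l2: "lex_less (hd B) (hd (Q' ! b))" using BQt by simp
          have "lex_less (hd B) h"
          proof (cases "hd (Q' ! b) = h")
            case True then show ?thesis using l2 by simp
          next
            case False then show ?thesis using hb l2 lex_trans[of "hd B" "hd (Q' ! b)" h] by blast
          qed
          then show ?thesis using l1 lex_asym by blast
        qed
      qed
      have witB: "\<forall>x\<in>set B. \<forall>y\<in>set B. c x = c y" "\<forall>a b. a < b \<and> b < length B \<longrightarrow> t (B ! a) < t (B ! b)"
        using Q'[unfolded BQt wit_cons] by blast+
      have BA: "set B \<subseteq> A"
      proof
        fix x assume x: "x \<in> set B"
        then obtain a where a: "a < length B" "x = B ! a" by (auto simp: in_set_conv_nth)
        have "hd B = B ! 0" using Bne by (simp add: hd_conv_nth)
        have "t (B ! 0) \<le> t (B ! a)"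
        proof (cases "a = 0")
          case False
          then have "t (B ! 0) < t (B ! a)" using witB(2)[rule_format, of 0 a] a(1) by simp
          then show ?thesis by simp
        qed simp
        then have "t h \<le> t x" using \<open>hd B = B ! 0\<close> hdB a(2) by simp
        moreover have "c x = c h" using witB(1) x hdB Bne hd_in_set by metis
        ultimately show "x \<in> A" using x BS unfolding A_def by auto
      qed
      show "Q' = Q \<or> (\<exists>b. b < length Q' \<and> b < length Q \<and> take b Q' = take b Q \<and> length (Q' ! b) < length (Q ! b))"
      proof (cases "length B < length L")
        case True
        then show ?thesis using BQt Q_def by (intro disjI2 exI[of _ 0]) auto
      next
        case False
        have "card (set B) = length B" using distB by (simp add: distinct_card)
        moreover have "card A = length L" using L(1,2) by (metis distinct_card)
        ultimately have "card (set B) = card A" using False BA finA card_mono by (metis le_antisym not_less)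
        then have setB: "set B = A" using card_subset_eq[OF finA BA] by blast
        have "sorted_wrt (\<lambda>x y. t x < t y) B" using witB(2) by (simp add: sorted_wrt_iff_nth_less)
        then have BL: "B = L" using sorted_unique[of t B L] L setB injA by simp
        have "rp (S - A) Qt" using rp_tail[of S B Qt] Q' BQt setB by simp
        moreover have "wit c t Qt" using wit_tail Q' BQt by blast
        ultimately have "Qt = Qr \<or> (\<exists>b. b < length Qt \<and> b < length Qr \<and> take b Qt = take b Qr \<and> length (Qt ! b) < length (Qr ! b))"
          using Qr(4) by blast
        then show ?thesis
        proof
          assume "Qt = Qr" then show ?thesis using BQt BL Q_def by simp
        next
          assume "\<exists>b. b < length Qt \<and> b < length Qr \<and> take b Qt = take b Qr \<and> length (Qt ! b) < length (Qr ! b)"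
          then obtain b where "b < length Qt" "b < length Qr" "take b Qt = take b Qr" "length (Qt ! b) < length (Qr ! b)" by blast
          then show ?thesis using BQt BL Q_def by (intro disjI2 exI[of _ "Suc b"]) simp
        qed
      qed
    qed
    show ?thesis using rpQ witQ sortQ maxQ by blast
  qed
qed



lemma lexord_pad:
  assumes "b < length Q'" "b < length Q" "take b Q' = take b Q" "length (Q' ! b) < length (Q ! b)"
  shows "(pad k (weight Q'), pad k (weight Q)) \<in> lexord less_than"
proof -
  have e1: "map length Q' = map length (take b Q') @ length (Q' ! b) # map length (drop (Suc b) Q')"
    using id_take_nth_drop[OF assms(1)] by (metis list.simps(9) map_append)
  have e2: "map length Q = map length (take b Q) @ length (Q ! b) # map length (drop (Suc b) Q)"
    using id_take_nth_drop[OF assms(2)] by (metis list.simps(9) map_append)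
  have "(length (Q' ! b) # (map length (drop (Suc b) Q') @ replicate (sum_list k - length Q') 0),
         length (Q ! b) # (map length (drop (Suc b) Q) @ replicate (sum_list k - length Q) 0)) \<in> lexord less_than"
    using assms(4) by (simp add: lexord_cons_cons)
  then have "(map length (take b Q) @ length (Q' ! b) # (map length (drop (Suc b) Q') @ replicate (sum_list k - length Q') 0),
         map length (take b Q) @ length (Q ! b) # (map length (drop (Suc b) Q) @ replicate (sum_list k - length Q) 0)) \<in> lexord less_than"
    by (rule lexord_append_leftI)
  moreover have "pad k (weight Q') = map length (take b Q) @ length (Q' ! b) # (map length (drop (Suc b) Q') @ replicate (sum_list k - length Q') 0)"
    unfolding pad_def weight_def length_map using e1 assms(3) by simp
  moreover have "pad k (weight Q) = map length (take b Q) @ length (Q ! b) # (map length (drop (Suc b) Q) @ replicate (sum_list k - length Q) 0)"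
    unfolding pad_def weight_def length_map using e2 by simp
  ultimately show ?thesis by simp
qed

lemma table_finite: "finite (table k)"
proof -
  have "table k = (SIGMA i:{1..length k}. {1..kth k i})" unfolding table_def by auto
  then show ?thesis by simp
qed

lemma rp_eq: "ray_partition k Q = rp (table k) Q"
  unfolding ray_partition_def rp_def by simp

lemma wit_eq: "witnessed Z Q = wit (\<lambda>x. pr_zeta (Z x)) (\<lambda>x. pr_t (Z x)) Q"
  unfolding witnessed_def wit_def by simp

theorem lemma3p10:
  fixes p q :: nat and k :: "nat list" and Z :: "nat \<times> nat \<Rightarrow> real list"
  assumes "q \<ge> 1"
    and "\<forall>ki\<in>set k. ki \<ge> 1"
    and "Vtilde p q k Z"
  shows "(\<exists>!Q. max_witnessed k Z Q) \<and>
         (q = 1 \<longrightarrow> (\<forall>sig. valid_Sigma k sig \<and> in_component k sig Z \<longrightarrow>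
            (\<forall>Q. max_witnessed k Z Q \<longrightarrow> Sigma_of_eq k Q sig)))"
proof -
  define c where "c = (\<lambda>x. pr_zeta (Z x))"
  define t where "t = (\<lambda>x. pr_t (Z x))"
  have V: "\<forall>x\<in>table k. length (Z x) = p + q" "inj_on Z (table k)"
    "\<forall>i j j'. (i, j) \<in> table k \<longrightarrow> (i, j') \<in> table k \<longrightarrow> pr_1 p (Z (i, j)) = pr_1 p (Z (i, j'))"
    using assms(3) unfolding Vtilde_def by blast+
  have inj: "\<forall>x\<in>table k. \<forall>y\<in>table k. c x = c y \<and> t x = t y \<longrightarrow> x = y"
  proof (intro ballI impI)
    fix x y assume x: "x \<in> table k" and y: "y \<in> table k" and e: "c x = c y \<and> t x = t y"
    have "Z x \<noteq> []" "Z y \<noteq> []" using V(1) x y assms(1) by (metis add_is_0 le_zero_eq list.size(3) not_one_le_zero)+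
    then have "Z x = Z y" using e unfolding c_def t_def pr_zeta_def pr_t_def
      by (metis append_butlast_last_id)
    then show "x = y" using V(2) x y inj_on_def by metis
  qed
  obtain Q0 where Q0: "rp (table k) Q0" "wit c t Q0"
    "sorted_wrt (\<lambda>x y. c x = c y \<longrightarrow> t x < t y) (concat (rev Q0))"
    "\<forall>Q'. rp (table k) Q' \<and> wit c t Q' \<longrightarrow> Q' = Q0 \<or>
       (\<exists>b. b < length Q' \<and> b < length Q0 \<and> take b Q' = take b Q0 \<and> length (Q' ! b) < length (Q0 ! b))"
    using greedy[OF table_finite inj] by blast
  have less: "Q' = Q0 \<or> (pad k (weight Q'), pad k (weight Q0)) \<in> lexord less_than"
    if "ray_partition k Q'" "witnessed Z Q'" for Q'
  proof -
    have "rp (table k) Q' \<and> wit c t Q'" using that rp_eq wit_eq c_def t_def by metis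
    then show ?thesis using Q0(4) lexord_pad by metis
  qed
  have max0: "max_witnessed k Z Q0"
    unfolding max_witnessed_def
  proof (intro conjI allI impI)
    show "ray_partition k Q0" using Q0(1) rp_eq by metis
    show "witnessed Z Q0" using Q0(2) wit_eq c_def t_def by metis
    fix Q' assume "ray_partition k Q' \<and> witnessed Z Q'"
    then show "lex_le (pad k (weight Q')) (pad k (weight Q0))"
      using less unfolding lex_le_def by blast
  qed
  have irr: "(xs, xs) \<notin> lexord less_than" for xs
    by (rule lexord_irreflexive) simp
  have uniq: "Q = Q0" if "max_witnessed k Z Q" for Q
  proof (rule ccontr)
    assume ne: "Q \<noteq> Q0"
    have m: "ray_partition k Q" "witnessed Z Q"
      "lex_le (pad k (weight Q0)) (pad k (weight Q))"
      using that max0 unfolding max_witnessed_def by blast+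
    have l1: "(pad k (weight Q), pad k (weight Q0)) \<in> lexord less_than" using less m(1,2) ne by blast
    show False
    proof (cases "pad k (weight Q0) = pad k (weight Q)")
      case True then show ?thesis using l1 irr by simp
    next
      case False
      then have "(pad k (weight Q0), pad k (weight Q)) \<in> lexord less_than" using m(3) lex_le_def by blast
      then have "(pad k (weight Q), pad k (weight Q)) \<in> lexord less_than"
        using l1 lexord_trans trans_less_than by blast
      then show ?thesis using irr by blast
    qed
  qed
  have part1: "\<exists>!Q. max_witnessed k Z Q" using max0 uniq by blast
  have part2: "Sigma_of_eq k Q sig"
    if q1: "q = 1" and sg: "valid_Sigma k sig" "in_component k sig Z" and mQ: "max_witnessed k Z Q" for sig Q
  proof -
    have QQ: "Q = Q0" using uniq mQ by blast
    show ?thesis unfolding Sigma_of_eq_def QQ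
    proof (intro ballI)
      fix i j assume i: "i \<in> {1..length k}" and j: "j \<in> {1..kth k i}"
      define ki where "ki = kth k i"
      define R where "R = Pair i ` {1..ki}"
      have Rt: "R \<subseteq> table k" unfolding R_def table_def ki_def using i by auto
      have Req: "{x \<in> table k. fst x = i} = R" unfolding R_def table_def ki_def using i by auto
      have cR: "c x = c y" if xyR: "x \<in> R" "y \<in> R" for x y
      proof -
        obtain j1 j2 where xy: "x = (i, j1)" "y = (i, j2)" using xyR unfolding R_def by auto
        have "pr_1 p (Z x) = pr_1 p (Z y)" using V(3) xyR Rt xy by blast
        moreover have "length (Z x) = p + 1" "length (Z y) = p + 1" using V(1) xyR Rt q1 by auto
        ultimately show ?thesis unfolding c_def pr_zeta_def pr_1_def by (simp add: butlast_conv_take)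
      qed
      have injR: "inj_on t R" using inj Rt cR unfolding inj_on_def by blast
      define F where "F = filter (\<lambda>x. fst x = i) (stacked Q0)"
      have setF: "set F = R" unfolding F_def stacked_def using Q0(1) Req unfolding rp_def by auto
      have "sorted_wrt (\<lambda>x y. c x = c y \<longrightarrow> t x < t y) F"
        unfolding F_def stacked_def using Q0(3) by (rule sorted_wrt_filter)
      then have sF: "sorted_wrt (\<lambda>x y. t x < t y) F"
        by (rule sorted_wrt_mono_rel[rotated]) (use setF cR in blast)
      define G where "G = map (\<lambda>j. (i, sig i j)) [1..<ki+1]"
      have perm: "sig i permutes {1..ki}" using sg(1) i unfolding valid_Sigma_def ki_def by blast
      have setG: "set G = R" unfolding G_def R_def using permutes_image[OF perm]
        by (metis atLeastLessThanSuc_atLeastAtMost image_image set_map set_upt Suc_eq_plus1)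
      have tr: "transp (\<lambda>x y. t x < t y)" by (auto simp: transp_def)
      have sG: "sorted_wrt (\<lambda>x y. t x < t y) G"
        unfolding sorted_wrt_iff_nth_Suc_transp[OF tr]
      proof (intro allI impI)
        fix n assume n: "Suc n < length G"
        then have n': "Suc n < ki" unfolding G_def by (simp del: upt_Suc)
        have "G ! n = (i, sig i (Suc n))" "G ! Suc n = (i, sig i (Suc (Suc n)))"
          using n' unfolding G_def by (simp_all del: upt_Suc)
        moreover have "pr_t (Z (i, sig i (Suc n))) < pr_t (Z (i, sig i (Suc (Suc n))))"
          using sg(2) i n' unfolding in_component_def ki_def by auto
        ultimately show "t (G ! n) < t (G ! Suc n)" unfolding t_def by simp
      qed
      have FG: "F = G" using sorted_unique[OF sF sG] setF setG injR by simp
      have "j - 1 < ki" "Suc (j - 1) = j" using j unfolding ki_def by auto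
      then have "G ! (j - 1) = (i, sig i j)" unfolding G_def by (simp del: upt_Suc)
      then show "sig i j = snd (filter (\<lambda>x. fst x = i) (stacked Q0) ! (j - 1))"
        using FG F_def by simp
    qed
  qed
  show ?thesis using part1 part2 by blast
qed

end
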